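(* For $a\in\{1,\dots,n\}$ let $z_a = q\omega_a - (q-1)\psi_a\psi_a^*\omega_a^{k+1}\in\mathrm{Cl}_q(n,k)$. Then each $z_a$ is central in $\mathrm{Cl}_q(n,k)$, and for every positive integer $r$, \[ z_a^r = q^r\omega_a^r - (q^r-1)\psi_a\psi_a^*\omega_a^{k+r}. \] In particular $z_a^k=\psi_a\psi_a^*+\psi_a^*\psi_a$, so $z_a^{2k}=1$.
   Context: Let $\mathbb{k}$ be a field of characteristic different from $2$, let $q\in\mathbb{k}^\times$, and let $n,k$ be positive integers. The quantum Clifford algebra $\mathrm{Cl}_q(n,k)$ is the unital associative $\mathbb{k}$-algebra generated by $\psi_a,\psi_a^*,\omega_a,\omega_a^{-1}$ for $a\in\{1,\dots,n\}$, subject to the relations (for all $a,b\in\{1,\dots,n\}$): $\omega_a\omega_b=\omega_b\omega_a$; $\omega_a\omega_a^{-1}=1$; $\omega_a\psi_b=q^{\delta_{ab}}\psi_b\omega_a$; $\omega_a\psi_b^*=q^{-\delta_{ab}}\psi_b^*\omega_a$; $\psi_a\psi_b+\psi_b\psi_a=0$; $\psi_a^*\psi_b^*+\psi_b^*\psi_a^*=0$; $\psi_a\psi_a^*+q^k\psi_a^*\psi_a=\omega_a^{-k}$; $\psi_a\psi_a^*+q^{-k}\psi_a^*\psi_a=\omega_a^{k}$; and $\psi_a\psi_b^*+\psi_b^*\psi_a=0$ if $a\neq b$. *)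

theory Defs
  imports Main
begin

text \<open>A unital associative k-algebra is modelled as a ring A (type 'a) together with a
unital ring homomorphism iota from the field k into the centre of A.
The data (iota, psi, psis, om, omi) satisfy the defining relations of Cl_q(n,k);
psis a stands for psi_a^*, om a for omega_a and omi a for omega_a^{-1}.\<close>

definition is_k_algebra_map :: "('k::field \<Rightarrow> 'a::ring_1) \<Rightarrow> bool" where
  "is_k_algebra_map \<iota> \<longleftrightarrow>
     \<iota> 1 = 1 \<and> (\<forall>c d. \<iota> (c + d) = \<iota> c + \<iota> d) \<and> (\<forall>c d. \<iota> (c * d) = \<iota> c * \<iota> d) \<and>
     (\<forall>c x. \<iota> c * x = x * \<iota> c)"

definition Cl_relations ::
  "('k::field \<Rightarrow> 'a::ring_1) \<Rightarrow> 'k \<Rightarrow> nat \<Rightarrow> nat \<Rightarrow>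
   (nat \<Rightarrow> 'a) \<Rightarrow> (nat \<Rightarrow> 'a) \<Rightarrow> (nat \<Rightarrow> 'a) \<Rightarrow> (nat \<Rightarrow> 'a) \<Rightarrow> bool" where
  "Cl_relations \<iota> q n k psi psis om omi \<longleftrightarrow>
    (\<forall>a\<in>{1..n}. \<forall>b\<in>{1..n}.
       om a * om b = om b * om a \<and>
       om a * omi a = 1 \<and> omi a * om a = 1 \<and>
       om a * psi b = \<iota> (if a = b then q else 1) * psi b * om a \<and>
       om a * psis b = \<iota> (if a = b then inverse q else 1) * psis b * om a \<and>
       psi a * psi b + psi b * psi a = 0 \<and>
       psis a * psis b + psis b * psis a = 0 \<and>
       psi a * psis a + \<iota> (q ^ k) * psis a * psi a = omi a ^ k \<and>
       psi a * psis a + \<iota> (inverse q ^ k) * psis a * psi a = om a ^ k \<and>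
       (a \<noteq> b \<longrightarrow> psi a * psis b + psis b * psi a = 0))"

text \<open>The subalgebra generated by the scalars and the generators (the image of Cl_q(n,k)).\<close>
inductive_set Cl_gen ::
  "('k \<Rightarrow> 'a::ring_1) \<Rightarrow> nat \<Rightarrow> (nat \<Rightarrow> 'a) \<Rightarrow> (nat \<Rightarrow> 'a) \<Rightarrow> (nat \<Rightarrow> 'a) \<Rightarrow> (nat \<Rightarrow> 'a) \<Rightarrow> 'a set"
  for \<iota> n psi psis om omi where
  scal: "\<iota> c \<in> Cl_gen \<iota> n psi psis om omi"
| gpsi: "a \<in> {1..n} \<Longrightarrow> psi a \<in> Cl_gen \<iota> n psi psis om omi"
| gpsis: "a \<in> {1..n} \<Longrightarrow> psis a \<in> Cl_gen \<iota> n psi psis om omi"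
| gom: "a \<in> {1..n} \<Longrightarrow> om a \<in> Cl_gen \<iota> n psi psis om omi"
| gomi: "a \<in> {1..n} \<Longrightarrow> omi a \<in> Cl_gen \<iota> n psi psis om omi"
| add: "x \<in> Cl_gen \<iota> n psi psis om omi \<Longrightarrow> y \<in> Cl_gen \<iota> n psi psis om omi \<Longrightarrow> x + y \<in> Cl_gen \<iota> n psi psis om omi"
| mult: "x \<in> Cl_gen \<iota> n psi psis om omi \<Longrightarrow> y \<in> Cl_gen \<iota> n psi psis om omi \<Longrightarrow> x * y \<in> Cl_gen \<iota> n psi psis om omi"

end

theory Submission
  imports Defs
begin

lemma pow_comm_gen:
  fixes a b :: "'a::ring_1"
  assumes "a * b = e * b * a" and "\<And>x. e * x = x * e"
  shows "a ^ n * b = e ^ n * b * a ^ n"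
proof (induction n)
  case 0 then show ?case by simp
next
  case (Suc n)
  have "a ^ Suc n * b = a * (a ^ n * b)" by (simp add: mult.assoc)
  also have "\<dots> = a * (e ^ n * b * a ^ n)" using Suc by simp
  also have "\<dots> = e ^ n * (a * b) * a ^ n"
  proof -
    have "e ^ n * a = a * e ^ n" using power_commuting_commutes[of e a n] assms(2) by simp
    thus ?thesis by (simp add: mult.assoc[symmetric])
  qed
  also have "\<dots> = e ^ Suc n * b * a ^ Suc n"
    by (simp only: assms(1) mult.assoc power_Suc2[of e n] power_Suc[of a n])
  finally show ?case .
qed

lemma inv_pow:
  fixes v w :: "'a::ring_1"
  assumes "v * w = 1"
  shows "v ^ n * w ^ n = 1"
proof (induction n)
  case 0 then show ?case by simp
next
  case (Suc n)
  have "v ^ Suc n * w ^ Suc n = v ^ n * (v * w) * w ^ n"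
    by (simp only: power_Suc2[of v n] power_Suc[of w n] mult.assoc)
  then show ?case using Suc assms by simp
qed

lemma core:
  fixes c d w v p s :: "'a::ring_1" and k :: nat
  assumes cc: "\<And>x. c * x = x * c" and dc: "\<And>x. d * x = x * d" and cd: "c * d = 1"
    and wv: "w * v = 1" and vw: "v * w = 1"
    and wp: "w * p = c * p * w" and ws: "w * s = d * s * w"
    and pp: "p * p = 0" and ss: "s * s = 0"
    and r1: "p * s + c ^ k * s * p = v ^ k" and r2: "p * s + d ^ k * s * p = w ^ k"
    and k1: "k \<ge> 1"
    and zdef: "z = c * w - (c - 1) * p * s * w ^ (k + 1)"
  shows "z * w = w * z" "z * p = p * z" "z * s = s * z"
    "\<And>r. r \<ge> 1 \<Longrightarrow> z ^ r = c ^ r * w ^ r - (c ^ r - 1) * p * s * w ^ (k + r)"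
    "z ^ k = p * s + s * p" "z ^ (2 * k) = 1"
proof -
  have dcc: "d * c = 1" using cd cc by metis
  have ckc: "\<And>x. c ^ n * x = x * c ^ n" for n by (metis cc power_commuting_commutes)
  have dkc: "\<And>x. d ^ n * x = x * d ^ n" for n by (metis dc power_commuting_commutes)
  have cdk: "c ^ n * d ^ n = 1" for n
  proof (induction n)
    case (Suc n)
    have "c ^ Suc n * d ^ Suc n = c * (c ^ n * d ^ n) * d"
      by (metis power_Suc power_Suc2 mult.assoc)
    then show ?case using Suc cd by simp
  qed simp
  have vkw: "v ^ n * w ^ n = 1" for n using inv_pow vw by blast
  have wkv: "w ^ n * v ^ n = 1" for n using inv_pow wv by blast
  have cL: "y * (c * x) = c * (y * x)" for x y by (metis cc mult.assoc)
  have dL: "y * (d * x) = d * (y * x)" for x y by (metis dc mult.assoc)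
  have ckL: "y * (c ^ n * x) = c ^ n * (y * x)" for x y n by (metis ckc mult.assoc)
  have dkL: "y * (d ^ n * x) = d ^ n * (y * x)" for x y n by (metis dkc mult.assoc)
  have wpx: "w * (p * x) = c * (p * (w * x))" for x using wp by (metis mult.assoc)
  have wsx: "w * (s * x) = d * (s * (w * x))" for x using ws by (metis mult.assoc)
  have vwx: "v * (w * x) = x" for x using vw by (simp add: mult.assoc[symmetric])
  have wvx: "w * (v * x) = x" for x using wv by (simp add: mult.assoc[symmetric])
  have wP: "w * (p * s) = p * (s * w)"
  proof -
    have "w * (p * s) = c * (p * (w * s))" using wpx by simp
    also have "... = c * (d * (p * (s * w)))" using ws dL by (simp add: mult.assoc)
    also have "... = p * (s * w)" using cd by (simp add: mult.assoc[symmetric])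
    finally show ?thesis .
  qed
  have wnP: "w ^ n * (p * s) = p * (s * w ^ n)" for n
  proof (induction n)
    case (Suc n)
    have "w ^ Suc n * (p * s) = w ^ n * (w * (p * s))" by (metis power_Suc2 mult.assoc)
    also have "... = (w ^ n * (p * s)) * w" using wP by (simp add: mult.assoc)
    also have "... = p * (s * (w ^ n * w))" using Suc by (simp add: mult.assoc)
    also have "... = p * (s * w ^ Suc n)" by (metis power_Suc2)
    finally show ?case .
  qed simp
  have ssx: "s * (s * x) = 0" for x by (metis ss mult.assoc mult_zero_left)
  have ppx: "p * (p * x) = 0" for x by (metis pp mult.assoc mult_zero_left)
  have PQ: "p * s * (s * p) = 0" by (simp add: mult.assoc ssx)
  have QP: "s * p * (p * s) = 0" by (simp add: mult.assoc ppx)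
  have PP: "p * s * (p * s) = p * s * v ^ k"
  proof -
    have "p * s * v ^ k = p * s * (p * s) + p * s * (c ^ k * s * p)" using r1 by (metis distrib_left)
    also have "p * s * (c ^ k * s * p) = c ^ k * (p * s * (s * p))" using ckc by (metis mult.assoc)
    finally show ?thesis using PQ by simp
  qed
  have Pp: "p * s * p = v ^ k * p"
  proof -
    have "v ^ k * p = p * s * p + c ^ k * s * p * p" using r1 by (metis distrib_right)
    thus ?thesis using pp by (simp add: mult.assoc)
  qed
  have sP: "s * (p * s) = s * v ^ k"
  proof -
    have "s * v ^ k = s * (p * s) + s * (c ^ k * s * p)" using r1 by (metis distrib_left)
    also have "s * (c ^ k * s * p) = c ^ k * (s * s * p)" using ckc by (metis mult.assoc)
    finally show ?thesis using ss by simp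
  qed
  have vp: "v * p = d * p * v"
  proof -
    have "p * v = v * (w * (p * v))" by (simp add: vwx)
    also have "... = v * (c * (p * (w * v)))" using wpx by simp
    also have "... = c * (v * p)" using cL wv by simp
    finally have "d * (p * v) = d * (c * (v * p))" by simp
    hence "d * (p * v) = v * p" using dcc by (simp add: mult.assoc[symmetric])
    thus ?thesis by (simp add: mult.assoc)
  qed
  have c1c: "(c - 1) * x = x * (c - 1)" for x using cc by (simp add: algebra_simps)
  have ck1c: "(c ^ n - 1) * x = x * (c ^ n - 1)" for x n using ckc by (simp add: algebra_simps)
  have c1L: "y * ((c - 1) * x) = (c - 1) * (y * x)" for x y by (metis c1c mult.assoc)
  have ck1L: "y * ((c ^ n - 1) * x) = (c ^ n - 1) * (y * x)" for x y n by (metis ck1c mult.assoc)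
  have vnp: "v ^ n * p = d ^ n * p * v ^ n" for n using pow_comm_gen[OF vp dc] .
  have wnp: "w ^ n * p = c ^ n * p * w ^ n" for n using pow_comm_gen[OF wp cc] .
  have wns: "w ^ n * s = d ^ n * s * w ^ n" for n using pow_comm_gen[OF ws dc] .
  have PPx: "p * (s * (p * (s * x))) = p * (s * (v ^ k * x))" for x
    using PP by (metis mult.assoc)
  have wnPx: "w ^ n * (p * (s * x)) = p * (s * (w ^ n * x))" for x n
    using wnP by (metis mult.assoc)
  have wPx: "w * (p * (s * x)) = p * (s * (w * x))" for x
    using wP by (metis mult.assoc)
  have PWk: "p * s * w ^ k = p * s * v ^ k"
  proof -
    have "p * s * w ^ k = p * s * (p * s) + p * s * (d ^ k * s * p)" using r2 by (metis distrib_left)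
    also have "p * s * (d ^ k * s * p) = d ^ k * (p * s * (s * p))" using dkc by (metis mult.assoc)
    finally show ?thesis using PQ PP by simp
  qed
  have P2k: "p * s * w ^ (k + k) = p * s"
  proof -
    have "p * s * w ^ (k + k) = p * s * w ^ k * w ^ k" by (simp add: power_add mult.assoc)
    also have "... = p * s * (v ^ k * w ^ k)" using PWk by (simp add: mult.assoc)
    finally show ?thesis using vkw by simp
  qed
  show G1: "z * w = w * z"
  proof -
    have "z * w = c * (w * w) - (c - 1) * (p * (s * (w ^ (k + 1) * w)))"
      unfolding zdef by (simp add: algebra_simps)
    also have "... = w * z"
      unfolding zdef by (simp add: algebra_simps cL wPx power_commutes)
    finally show ?thesis .
  qed
  show G2: "z ^ r = c ^ r * w ^ r - (c ^ r - 1) * p * s * w ^ (k + r)" if "r \<ge> 1" for r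
    using that
  proof (induction r rule: dec_induct)
    case base
    then show ?case using zdef by simp
  next
    case (step r)
    define M where "M = p * (s * w ^ (k + Suc r))"
    have T1: "c ^ r * w ^ r * (c * w) = c ^ Suc r * w ^ Suc r"
      by (simp add: mult.assoc cL power_commutes)
    have T2: "c ^ r * w ^ r * ((c - 1) * p * s * w ^ (k + 1)) = (c ^ r * (c - 1)) * M"
    proof -
      have "c ^ r * w ^ r * ((c - 1) * p * s * w ^ (k + 1))
          = c ^ r * ((c - 1) * (w ^ r * (p * (s * w ^ (k + 1)))))"
        by (simp add: mult.assoc c1L)
      also have "... = c ^ r * ((c - 1) * (p * (s * (w ^ r * w ^ (k + 1)))))"
        by (simp add: wnPx)
      also have "w ^ r * w ^ (k + 1) = w ^ (k + Suc r)"
        using power_add[of w r "k + 1", symmetric] by (simp add: add.commute)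
      finally show ?thesis unfolding M_def by (simp add: mult.assoc)
    qed
    have T3: "(c ^ r - 1) * p * s * w ^ (k + r) * (c * w) = ((c ^ r - 1) * c) * M"
    proof -
      have "(c ^ r - 1) * p * s * w ^ (k + r) * (c * w)
          = (c ^ r - 1) * (c * (p * (s * (w ^ (k + r) * w))))"
        by (simp add: mult.assoc cL)
      also have "w ^ (k + r) * w = w ^ (k + Suc r)" by (simp add: power_commutes)
      finally show ?thesis unfolding M_def by (simp add: mult.assoc)
    qed
    have T4: "(c ^ r - 1) * p * s * w ^ (k + r) * ((c - 1) * p * s * w ^ (k + 1))
        = ((c ^ r - 1) * (c - 1)) * M"
    proof -
      have "(c ^ r - 1) * p * s * w ^ (k + r) * ((c - 1) * p * s * w ^ (k + 1))
          = (c ^ r - 1) * ((c - 1) * (p * (s * (w ^ (k + r) * (p * (s * w ^ (k + 1)))))))"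
        by (simp add: mult.assoc c1L)
      also have "... = (c ^ r - 1) * ((c - 1) * (p * (s * (v ^ k * (w ^ (k + r) * w ^ (k + 1))))))"
        by (simp add: wnPx PPx)
      also have "v ^ k * (w ^ (k + r) * w ^ (k + 1)) = w ^ (k + Suc r)"
      proof -
        have "v ^ k * (w ^ (k + r) * w ^ (k + 1)) = (v ^ k * w ^ k) * (w ^ r * w ^ (k + 1))"
          by (simp add: power_add mult.assoc)
        also have "... = w ^ (k + Suc r)"
          using vkw power_add[of w r "k + 1", symmetric] by (simp add: add.commute)
        finally show ?thesis .
      qed
      finally show ?thesis unfolding M_def by (simp add: mult.assoc)
    qed
    have coef: "c ^ r * (c - 1) + (c ^ r - 1) * c - (c ^ r - 1) * (c - 1) = c ^ Suc r - 1"
      by (simp add: algebra_simps power_commutes)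
    have "z ^ Suc r = z ^ r * z" by (simp add: power_commutes)
    also have "... = (c ^ r * w ^ r - (c ^ r - 1) * p * s * w ^ (k + r))
        * (c * w - (c - 1) * p * s * w ^ (k + 1))" using step zdef by simp
    also have "... = c ^ r * w ^ r * (c * w) - c ^ r * w ^ r * ((c - 1) * p * s * w ^ (k + 1))
        - (c ^ r - 1) * p * s * w ^ (k + r) * (c * w)
        + (c ^ r - 1) * p * s * w ^ (k + r) * ((c - 1) * p * s * w ^ (k + 1))"
      by (simp add: algebra_simps)
    also have "... = c ^ Suc r * w ^ Suc r
        - (c ^ r * (c - 1) + (c ^ r - 1) * c - (c ^ r - 1) * (c - 1)) * M"
      unfolding T1 T2 T3 T4 by (simp add: algebra_simps)
    also have "... = c ^ Suc r * w ^ Suc r - (c ^ Suc r - 1) * p * s * w ^ (k + Suc r)"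
      unfolding coef M_def by (simp add: mult.assoc)
    finally show ?case .
  qed
  have wkPQ: "c ^ k * w ^ k = c ^ k * (p * s) + s * p"
  proof -
    have "c ^ k * w ^ k = c ^ k * (p * s) + c ^ k * (d ^ k * s * p)" using r2 by (metis distrib_left)
    also have "c ^ k * (d ^ k * s * p) = s * p" using cdk by (simp add: mult.assoc[symmetric])
    finally show ?thesis .
  qed
  show G3: "z ^ k = p * s + s * p"
  proof -
    have "z ^ k = c ^ k * w ^ k - (c ^ k - 1) * (p * s * w ^ (k + k))"
      using G2[OF k1] by (simp add: mult.assoc)
    also have "... = c ^ k * (p * s) + s * p - (c ^ k - 1) * (p * s)" using P2k wkPQ by simp
    also have "... = p * s + s * p" by (simp add: algebra_simps)
    finally show ?thesis .
  qed
  show G4: "z ^ (2 * k) = 1"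
  proof -
    have QQ: "s * p * (s * p) = s * (p * (s * p))" by (simp add: mult.assoc)
    have "z ^ (2 * k) = (p * s + s * p) * (p * s + s * p)"
      using G3 by (simp add: power_mult power2_eq_square mult.commute[of 2 k])
    also have "... = p * s * (p * s) + s * p * (s * p)"
      using PQ QP by (simp add: distrib_left distrib_right)
    also have "... = (p * s + d ^ k * s * p) * (p * s + c ^ k * s * p)"
    proof -
      have "p * s * (c ^ k * s * p) = c ^ k * (p * (s * (s * p)))" by (simp only: mult.assoc ckL)
      hence a: "p * s * (c ^ k * s * p) = 0" by (simp only: ssx mult_zero_right)
      have b: "d ^ k * s * p * (p * s) = 0" using QP by (simp add: mult.assoc ppx)
      have "d ^ k * s * p * (c ^ k * s * p) = c ^ k * (d ^ k * (s * (p * (s * p))))"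
        by (simp only: mult.assoc ckL)
      also have "... = (c ^ k * d ^ k) * (s * (p * (s * p)))" by (simp only: mult.assoc)
      finally have cc2: "d ^ k * s * p * (c ^ k * s * p) = s * p * (s * p)"
        using cdk by (simp add: mult.assoc)
      show ?thesis by (simp add: distrib_left distrib_right a b cc2)
    qed
    also have "... = w ^ k * v ^ k" using r1 r2 by simp
    finally show ?thesis using wkv by simp
  qed
  show G5: "z * p = p * z"
  proof -
    have "p * z = c * (p * w)" unfolding zdef by (simp add: algebra_simps cL ppx)
    moreover have "z * p = c * (c * (p * w)) - (c - 1) * (c * (p * w))"
    proof -
      have e1: "w ^ (k + 1) * p = c ^ (k + 1) * (p * w ^ (k + 1))" using wnp[of "k + 1"] by (simp only: mult.assoc)
      have e2: "p * (s * p) = d ^ k * (p * v ^ k)" using Pp vnp by (simp add: mult.assoc)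
      have "v ^ k * w ^ (k + 1) = (v ^ k * w ^ k) * w" by (simp add: mult.assoc power_commutes)
      hence e3: "v ^ k * w ^ (k + 1) = w" using vkw by simp
      have e4: "c ^ (k + 1) * d ^ k = c" by (simp add: mult.assoc cdk)
      have "p * s * w ^ (k + 1) * p = c ^ (k + 1) * (p * (s * (p * w ^ (k + 1))))"
        by (simp only: mult.assoc e1 ckL)
      also have "... = c ^ (k + 1) * (d ^ k * (p * (v ^ k * w ^ (k + 1))))"
        using e2 by (metis mult.assoc)
      also have "... = c * (p * w)" using e3 e4 by (simp add: mult.assoc[symmetric])
      finally have "p * s * w ^ (k + 1) * p = c * (p * w)" .
      moreover have "c * w * p = c * (c * (p * w))" using wp by (simp add: mult.assoc)
      ultimately show ?thesis unfolding zdef by (simp add: algebra_simps)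
    qed
    ultimately show ?thesis by (simp add: algebra_simps)
  qed
  show G6: "z * s = s * z"
  proof -
    have "z * s = s * w"
    proof -
      have e1: "w ^ (k + 1) * s = d ^ (k + 1) * (s * w ^ (k + 1))" using wns[of "k + 1"] by (simp only: mult.assoc)
      have "p * s * w ^ (k + 1) * s = d ^ (k + 1) * (p * (s * (s * w ^ (k + 1))))"
        by (simp only: mult.assoc e1 dkL)
      hence "p * s * w ^ (k + 1) * s = 0" by (simp only: ssx mult_zero_right)
      moreover have "c * w * s = s * w"
      proof -
        have "c * w * s = c * (d * s * w)" using ws by (simp only: mult.assoc)
        also have "... = s * w" using cd by (simp only: mult.assoc[symmetric] mult_1_left)
        finally show ?thesis .
      qed
      ultimately show ?thesis unfolding zdef by (simp add: algebra_simps)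
    qed
    moreover have "s * z = s * w"
    proof -
      have "s * (p * s * w ^ (k + 1)) = s * (v ^ k * w ^ (k + 1))" by (metis sP mult.assoc)
      also have "v ^ k * w ^ (k + 1) = (v ^ k * w ^ k) * w" by (simp add: mult.assoc power_commutes)
      also have "s * ((v ^ k * w ^ k) * w) = s * w" using vkw by simp
      finally have "s * (p * s * w ^ (k + 1)) = s * w" .
      moreover have "s * ((c - 1) * p * s * w ^ (k + 1)) = (c - 1) * (s * (p * s * w ^ (k + 1)))"
        by (simp only: mult.assoc c1L)
      ultimately have "s * ((c - 1) * p * s * w ^ (k + 1)) = (c - 1) * (s * w)" by simp
      moreover have "s * (c * w) = c * (s * w)" using cL .
      ultimately show ?thesis unfolding zdef by (simp add: algebra_simps)
    qed
    ultimately show ?thesis by simp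
  qed
qed


lemma commz:
  fixes c w p s x z :: "'a::ring_1"
  assumes cc: "\<And>y. c * y = y * c" and xw: "x * w = w * x" and xP: "x * (p * s) = p * s * x"
    and zdef: "z = c * w - (c - 1) * p * s * w ^ (k + 1)"
  shows "z * x = x * z"
proof -
  have xwn: "x * w ^ n = w ^ n * x" for n using power_commuting_commutes[of w x n] xw by simp
  have c1: "(c - 1) * y = y * (c - 1)" for y using cc by (simp add: algebra_simps)
  have "x * ((c - 1) * p * s * w ^ (k + 1)) = (c - 1) * (x * (p * s)) * w ^ (k + 1)"
    using c1 by (metis mult.assoc)
  also have "... = (c - 1) * p * s * (x * w ^ (k + 1))" using xP by (simp add: mult.assoc)
  also have "... = (c - 1) * p * s * w ^ (k + 1) * x" using xwn[of "k + 1"] by (simp only: mult.assoc)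
  finally have A: "x * ((c - 1) * p * s * w ^ (k + 1)) = (c - 1) * p * s * w ^ (k + 1) * x" .
  have B: "x * (c * w) = c * w * x" using cc xw by (metis mult.assoc)
  show ?thesis unfolding zdef using A B by (simp add: algebra_simps)
qed

lemma iota_facts:
  assumes "is_k_algebra_map \<iota>"
  shows "\<iota> 0 = 0" "\<iota> (x - y) = \<iota> x - \<iota> y" "\<iota> (x ^ m) = \<iota> x ^ m" "\<iota> 1 = 1"
    "\<iota> (x * y) = \<iota> x * \<iota> y" "\<iota> (x + y) = \<iota> x + \<iota> y" "\<iota> x * u = u * \<iota> x"
proof -
  have add: "\<And>c d. \<iota> (c + d) = \<iota> c + \<iota> d" and mul: "\<And>c d. \<iota> (c * d) = \<iota> c * \<iota> d"
    and one: "\<iota> 1 = 1" and cen: "\<And>c x. \<iota> c * x = x * \<iota> c"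
    using assms unfolding is_k_algebra_map_def by blast+
  show z: "\<iota> 0 = 0" using add[of 0 0] by simp
  have "\<iota> x = \<iota> (x - y) + \<iota> y" using add[of "x - y" y] by simp
  then show "\<iota> (x - y) = \<iota> x - \<iota> y" by (simp add: algebra_simps)
  show "\<iota> (x ^ m) = \<iota> x ^ m" by (induction m) (simp_all add: one mul)
  show "\<iota> 1 = 1" by (rule one)
  show "\<iota> (x * y) = \<iota> x * \<iota> y" by (rule mul)
  show "\<iota> (x + y) = \<iota> x + \<iota> y" by (rule add)
  show "\<iota> x * u = u * \<iota> x" by (rule cen)
qed

theorem lemma3p13:
  fixes \<iota> :: "'k::field \<Rightarrow> 'a::ring_1" and q :: 'k and n k :: nat
    and psi psis om omi :: "nat \<Rightarrow> 'a" and z :: "nat \<Rightarrow> 'a"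
  assumes "(2::'k) \<noteq> 0" and "q \<noteq> 0" and "n \<ge> 1" and "k \<ge> 1"
    and "is_k_algebra_map \<iota>"
    and "Cl_relations \<iota> q n k psi psis om omi"
    and "\<And>a. z a = \<iota> q * om a - \<iota> (q - 1) * psi a * psis a * om a ^ (k + 1)"
    and "a \<in> {1..n}"
  shows "(\<forall>x\<in>Cl_gen \<iota> n psi psis om omi. z a * x = x * z a)
    \<and> (\<forall>r::nat. r \<ge> 1 \<longrightarrow>
         z a ^ r = \<iota> (q ^ r) * om a ^ r - \<iota> (q ^ r - 1) * psi a * psis a * om a ^ (k + r))
    \<and> z a ^ k = psi a * psis a + psis a * psi a
    \<and> z a ^ (2 * k) = 1"
proof -
  note I = iota_facts[OF assms(5)]
  have aa: "a \<in> {1..n}" by fact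
  have R: "om a' * om b = om b * om a' \<and>
       om a' * omi a' = 1 \<and> omi a' * om a' = 1 \<and>
       om a' * psi b = \<iota> (if a' = b then q else 1) * psi b * om a' \<and>
       om a' * psis b = \<iota> (if a' = b then inverse q else 1) * psis b * om a' \<and>
       psi a' * psi b + psi b * psi a' = 0 \<and>
       psis a' * psis b + psis b * psis a' = 0 \<and>
       psi a' * psis a' + \<iota> (q ^ k) * psis a' * psi a' = omi a' ^ k \<and>
       psi a' * psis a' + \<iota> (inverse q ^ k) * psis a' * psi a' = om a' ^ k \<and>
       (a' \<noteq> b \<longrightarrow> psi a' * psis b + psis b * psi a' = 0)"
    if "a' \<in> {1..n}" "b \<in> {1..n}" for a' b
    using assms(6) that unfolding Cl_relations_def by blast
  define c where "c = \<iota> q"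
  define d where "d = \<iota> (inverse q)"
  have cc: "\<And>x. c * x = x * c" unfolding c_def using I(7) by blast
  have dc: "\<And>x. d * x = x * d" unfolding d_def using I(7) by blast
  have cd: "c * d = 1" unfolding c_def d_def using I(5)[symmetric] I(4) assms(2) by simp
  have two: "x = 0" if "x + x = 0" for x :: 'a
  proof -
    have "\<iota> 2 * x = \<iota> 1 * x + \<iota> 1 * x" using I(6)[of 1 1] by (simp add: distrib_right)
    hence "\<iota> 2 * x = 0" using that I(4) by simp
    hence "\<iota> (inverse 2) * (\<iota> 2 * x) = 0" by simp
    moreover have "\<iota> (inverse 2) * (\<iota> 2 * x) = \<iota> (inverse 2 * 2) * x"
      by (simp only: I(5) mult.assoc)
    moreover have "inverse 2 * (2::'k) = 1" using assms(1) by simp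
    ultimately show ?thesis using I(4) by simp
  qed
  have Raa: "om a * omi a = 1 \<and> omi a * om a = 1 \<and>
       om a * psi a = c * psi a * om a \<and>
       om a * psis a = d * psis a * om a \<and>
       psi a * psi a + psi a * psi a = 0 \<and>
       psis a * psis a + psis a * psis a = 0 \<and>
       psi a * psis a + c ^ k * psis a * psi a = omi a ^ k \<and>
       psi a * psis a + d ^ k * psis a * psi a = om a ^ k"
    using R[OF aa aa] unfolding c_def d_def by (simp add: I(3))
  have zdef: "z a = c * om a - (c - 1) * psi a * psis a * om a ^ (k + 1)"
    using assms(7)[of a] unfolding c_def by (simp add: I(2) I(4))
  have wv: "om a * omi a = 1" and vw: "omi a * om a = 1"
    and wp: "om a * psi a = c * psi a * om a" and ws: "om a * psis a = d * psis a * om a"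
    and pp2: "psi a * psi a + psi a * psi a = 0" and ss2: "psis a * psis a + psis a * psis a = 0"
    and r1: "psi a * psis a + c ^ k * psis a * psi a = omi a ^ k"
    and r2: "psi a * psis a + d ^ k * psis a * psi a = om a ^ k"
    using Raa by blast+
  have pp: "psi a * psi a = 0" using two[OF pp2] .
  have ss: "psis a * psis a = 0" using two[OF ss2] .
  note C = core[OF cc dc cd wv vw wp ws pp ss r1 r2 assms(4) zdef]
  have Cw: "z a * om a = om a * z a" and Cp: "z a * psi a = psi a * z a"
    and Cs: "z a * psis a = psis a * z a"
    and Cr: "\<And>r. r \<ge> 1 \<Longrightarrow> z a ^ r = c ^ r * om a ^ r - (c ^ r - 1) * psi a * psis a * om a ^ (k + r)"
    and Ck: "z a ^ k = psi a * psis a + psis a * psi a" and C2: "z a ^ (2 * k) = 1"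
    using C by blast+
  have comm_om: "z a * om b = om b * z a" if b: "b \<in> {1..n}" for b
  proof (cases "b = a")
    case True then show ?thesis using Cw by simp
  next
    case False
    have r1: "om b * psi a = psi a * om b" using R[OF b aa] False I(4) by simp
    have r2: "om b * psis a = psis a * om b" using R[OF b aa] False I(4) by simp
    have r3: "om b * om a = om a * om b" using R[OF b aa] by simp
    have "om b * (psi a * psis a) = psi a * psis a * om b"
      by (metis r1 r2 mult.assoc)
    then show ?thesis using commz[OF cc r3 _ zdef] by simp
  qed
  have comm_all: "z a * x = x * z a" if "x \<in> Cl_gen \<iota> n psi psis om omi" for x
    using that
  proof (induction rule: Cl_gen.induct)
    case (scal c')
    then show ?case using I(7) by metis
  next
    case (gpsi b)
    show ?case
    proof (cases "b = a")
      case True then show ?thesis using Cp by simp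
    next
      case False
      have r1: "om a * psi b = psi b * om a" using R[OF aa gpsi] False I(4) by simp
      have r2: "psi b * psi a = - (psi a * psi b)" using R[OF aa gpsi]
        by (simp add: eq_neg_iff_add_eq_0 add.commute)
      have r3: "psi b * psis a = - (psis a * psi b)" using R[OF gpsi aa] False
        by (simp add: eq_neg_iff_add_eq_0 add.commute)
      have "psi b * (psi a * psis a) = psi a * psis a * psi b"
      proof -
        have "psi b * (psi a * psis a) = - (psi a * (psi b * psis a))" using r2
          by (metis mult.assoc mult_minus_left)
        also have "... = psi a * psis a * psi b" using r3 by (simp add: mult.assoc)
        finally show ?thesis .
      qed
      then show ?thesis using commz[OF cc r1[symmetric] _ zdef] by simp
    qed
  next
    case (gpsis b)
    show ?case
    proof (cases "b = a")
      case True then show ?thesis using Cs by simp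
    next
      case False
      have r1: "om a * psis b = psis b * om a" using R[OF aa gpsis] False I(4) by simp
      have r2: "psis b * psi a = - (psi a * psis b)" using R[OF aa gpsis] False
        by (simp add: eq_neg_iff_add_eq_0 add.commute)
      have r3: "psis b * psis a = - (psis a * psis b)" using R[OF aa gpsis]
        by (simp add: eq_neg_iff_add_eq_0 add.commute)
      have "psis b * (psi a * psis a) = psi a * psis a * psis b"
      proof -
        have "psis b * (psi a * psis a) = - (psi a * (psis b * psis a))" using r2
          by (metis mult.assoc mult_minus_left)
        also have "... = psi a * psis a * psis b" using r3 by (simp add: mult.assoc)
        finally show ?thesis .
      qed
      then show ?thesis using commz[OF cc r1[symmetric] _ zdef] by simp
    qed
  next
    case (gom b)
    then show ?case using comm_om by simp
  next
    case (gomi b)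
    have w: "om b * omi b = 1" "omi b * om b = 1" using R[OF gomi gomi] by auto
    have "omi b * z a = omi b * z a * (om b * omi b)" using w by simp
    also have "... = omi b * (z a * om b) * omi b" by (simp add: mult.assoc)
    also have "... = omi b * (om b * z a) * omi b" using comm_om[OF gomi] by simp
    also have "... = z a * omi b" using w by (simp add: mult.assoc[symmetric])
    finally show ?case by simp
  next
    case (add x y)
    then show ?case by (simp add: algebra_simps)
  next
    case (mult x y)
    then show ?case by (metis mult.assoc)
  qed
  have Cr': "z a ^ r = \<iota> (q ^ r) * om a ^ r - \<iota> (q ^ r - 1) * psi a * psis a * om a ^ (k + r)"
    if "r \<ge> 1" for r
    using Cr[OF that] unfolding c_def by (simp add: I(2) I(3) I(4))
  show ?thesis using comm_all Cr' Ck C2 by blast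
qed

end
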